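(* Let $2\le n\le\kappa+1$. Then the subspace $\mathcal K_{[n;\kappa]}$ of skew-symmetric games in $\mathcal G_{[n;\kappa]}\cong\mathbb R^{n\kappa^n}$ has dimension $$\dim\mathcal K_{[n;\kappa]}=\kappa\binom{\kappa}{n-1}=\frac{\kappa\cdot\kappa!}{(n-1)!\,(\kappa-n+1)!}.$$
   Context: A finite game $G\in\mathcal G_{[n;\kappa]}$ has players $\{1,\dots,n\}$, each with strategy set $\{1,\dots,\kappa\}$, and payoff functions $c_i:\{1,\dots,\kappa\}^n\to\mathbb R$; it is identified with the vector of all payoff values in $\mathbb R^{n\kappa^n}$. $G$ is skew-symmetric if for every permutation $\sigma\in\mathbf S_n$, every $i$ and every profile, $c_i(x_1,\dots,x_n)=\mathrm{sgn}(\sigma)\,c_{\sigma(i)}(x_{\sigma^{-1}(1)},\dots,x_{\sigma^{-1}(n)})$. $\mathcal K_{[n;\kappa]}$ is the linear subspace of skew-symmetric games. *)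

theory Defs
  imports Complex_Main "HOL-Library.Function_Algebras" "HOL-Combinatorics.Permutations"
begin

text \<open>A game is a payoff function c :: player \<Rightarrow> profile \<Rightarrow> real, vanishing outside
  the players/profiles; this space is (isomorphic to) R^(n kappa^n).\<close>

definition profiles :: "nat \<Rightarrow> nat \<Rightarrow> (nat \<Rightarrow> nat) set" where
  "profiles n \<kappa> = PiE {1..n} (\<lambda>_. {1..\<kappa>})"

type_synonym game = "nat \<Rightarrow> (nat \<Rightarrow> nat) \<Rightarrow> real"

definition games :: "nat \<Rightarrow> nat \<Rightarrow> game set" where
  "games n \<kappa> = {c. \<forall>i x. c i x \<noteq> 0 \<longrightarrow> i \<in> {1..n} \<and> x \<in> profiles n \<kappa>}"

definition game_scale :: "real \<Rightarrow> game \<Rightarrow> game" where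
  "game_scale r c = (\<lambda>i x. r * c i x)"

definition skew_symmetric :: "nat \<Rightarrow> nat \<Rightarrow> game \<Rightarrow> bool" where
  "skew_symmetric n \<kappa> c \<longleftrightarrow>
     (\<forall>\<sigma>. \<sigma> permutes {1..n} \<longrightarrow>
        (\<forall>i\<in>{1..n}. \<forall>x\<in>profiles n \<kappa>.
           c i x = of_int (sign \<sigma>) * c (\<sigma> i) (x \<circ> inv \<sigma>)))"

definition skew_games :: "nat \<Rightarrow> nat \<Rightarrow> game set" where
  "skew_games n \<kappa> = {c \<in> games n \<kappa>. skew_symmetric n \<kappa> c}"

end

theory Submission
  imports Defs
begin

interpretation gs: vector_space game_scale
  by unfold_locales (auto simp: game_scale_def fun_eq_iff algebra_simps)

lemma sum_fun_apply2: "(sum f A) i x = (\<Sum>a\<in>A. (f a :: game) i x)"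
  by (induction A rule: infinite_finite_induct) auto

lemma scale_apply: "game_scale r c i x = r * c i x"
  by (simp add: game_scale_def)

definition TT :: "nat \<Rightarrow> nat \<Rightarrow> (nat \<times> nat set) set" where
  "TT n \<kappa> = {1..\<kappa>} \<times> {S. S \<subseteq> {1..\<kappa>} \<and> card S = n - 1}"

definition rep :: "nat \<Rightarrow> nat \<Rightarrow> nat \<times> nat set \<Rightarrow> (nat \<Rightarrow> nat)" where
  "rep n \<kappa> t = (SOME r. r \<in> profiles n \<kappa> \<and> r 1 = fst t \<and> inj_on r {2..n} \<and> r ` {2..n} = snd t)"

definition bvec :: "nat \<Rightarrow> nat \<Rightarrow> nat \<times> nat set \<Rightarrow> game" where
  "bvec n \<kappa> t = (\<lambda>i x. \<Sum>p\<in>{p. p permutes {1..n}}.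
      if p i = 1 \<and> rep n \<kappa> t \<circ> p = x then of_int (sign p) else 0)"

context
  fixes n \<kappa> :: nat
  assumes n2: "2 \<le> n"
begin

lemma rep_ex:
  assumes t: "t \<in> TT n \<kappa>"
  shows "\<exists>r. r \<in> profiles n \<kappa> \<and> r 1 = fst t \<and> inj_on r {2..n} \<and> r ` {2..n} = snd t"
proof -
  obtain a S where tt: "t = (a, S)" and a: "a \<in> {1..\<kappa>}" and S: "S \<subseteq> {1..\<kappa>}" "card S = n - 1"
    using t unfolding TT_def by auto
  have "finite S" using S finite_subset by blast
  moreover have "card {2..n} = card S" using S n2 by simp
  ultimately obtain f where f: "bij_betw f {2..n} S"
    using finite_same_card_bij[of "{2..n}" S] by auto
  define r where "r = (\<lambda>k. if k = 1 then a else if k \<in> {2..n} then f k else undefined)"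
  have fk: "f k \<in> {1..\<kappa>}" if "k \<in> {2..n}" for k
    using bij_betwE[OF f] S(1) that by blast
  have "r \<in> profiles n \<kappa>"
    unfolding profiles_def r_def using a fk n2
    by (auto simp: PiE_def extensional_def)
  moreover have "inj_on r {2..n}" using f unfolding r_def bij_betw_def inj_on_def by auto
  moreover have "r ` {2..n} = S" using f unfolding r_def bij_betw_def by (auto simp: image_def)
  ultimately show ?thesis using tt by (auto simp: r_def)
qed

lemma rep_props:
  assumes t: "t \<in> TT n \<kappa>"
  shows "rep n \<kappa> t \<in> profiles n \<kappa>" "rep n \<kappa> t 1 = fst t" "inj_on (rep n \<kappa> t) {2..n}"
    "rep n \<kappa> t ` {2..n} = snd t"
  using someI_ex[OF rep_ex[OF t]] unfolding rep_def by auto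

lemma perm_permutation: "p permutes {1..n} \<Longrightarrow> permutation p"
  by (auto simp: permutation_permutes)

lemma comp_profile:
  assumes r: "r \<in> profiles n \<kappa>" and p: "p permutes {1..n}"
  shows "r \<circ> p \<in> profiles n \<kappa>"
proof -
  have "r (p k) \<in> {1..\<kappa>}" if "k \<in> {1..n}" for k
    using r permutes_in_image[OF p, of k] that unfolding profiles_def by (auto simp: PiE_def Pi_def)
  moreover have "r (p k) = undefined" if "k \<notin> {1..n}" for k
    using r permutes_not_in[OF p that] that unfolding profiles_def by (auto simp: PiE_def extensional_def)
  ultimately show ?thesis unfolding profiles_def by (auto simp: PiE_def extensional_def)
qed

lemma image_2n:
  assumes q: "q permutes {1..n}" and q1: "q 1 = 1"
  shows "q ` {2..n} = {2..n}"
proof -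
  have e: "{2..n} = {1..n} - {1::nat}" by auto
  show ?thesis unfolding e image_set_diff[OF permutes_inj[OF q]] permutes_image[OF q] using q1 by simp
qed

lemma perm_fix:
  assumes t: "t \<in> TT n \<kappa>" and q: "q permutes {1..n}" and q1: "q 1 = 1"
    and eq: "rep n \<kappa> t \<circ> q = rep n \<kappa> t"
  shows "q = id"
proof (rule ext)
  fix k
  show "q k = id k"
  proof (cases "k \<in> {2..n}")
    case True
    then have "q k \<in> {2..n}" using image_2n[OF q q1] by blast
    moreover have "rep n \<kappa> t (q k) = rep n \<kappa> t k" using fun_cong[OF eq, of k] by simp
    ultimately show ?thesis using rep_props(3)[OF t] True unfolding inj_on_def by auto
  next
    case False
    then have "k = 1 \<or> k \<notin> {1..n}" by auto
    then show ?thesis using q1 permutes_not_in[OF q] by auto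
  qed
qed

lemma rep_inj:
  assumes t: "t \<in> TT n \<kappa>" and u: "u \<in> TT n \<kappa>" and q: "q permutes {1..n}" and q1: "q 1 = 1"
    and eq: "rep n \<kappa> u = rep n \<kappa> t \<circ> q"
  shows "u = t"
proof -
  have "fst u = fst t" using rep_props(2)[OF u] rep_props(2)[OF t] eq q1 by simp
  moreover have "snd u = snd t"
  proof -
    have "snd u = (rep n \<kappa> t \<circ> q) ` {2..n}" using rep_props(4)[OF u] eq by simp
    also have "\<dots> = rep n \<kappa> t ` (q ` {2..n})" by (simp add: image_comp)
    also have "\<dots> = snd t" using rep_props(4)[OF t] image_2n[OF q q1] by simp
    finally show ?thesis .
  qed
  ultimately show ?thesis by (simp add: prod_eq_iff)
qed

lemma bvec_val:
  assumes t: "t \<in> TT n \<kappa>" and p0: "p0 permutes {1..n}" and i: "p0 i = 1"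
  shows "bvec n \<kappa> t i (rep n \<kappa> t \<circ> p0) = of_int (sign p0)"
proof -
  have eqv: "(p i = 1 \<and> rep n \<kappa> t \<circ> p = rep n \<kappa> t \<circ> p0) \<longleftrightarrow> p = p0"
    if p: "p permutes {1..n}" for p
  proof
    assume h: "p i = 1 \<and> rep n \<kappa> t \<circ> p = rep n \<kappa> t \<circ> p0"
    define q where "q = p \<circ> inv p0"
    have qp: "q permutes {1..n}" unfolding q_def by (intro permutes_compose permutes_inv p p0)
    have "inv p0 1 = i" using permutes_inverses(2)[OF p0, of i] i by simp
    then have q1: "q 1 = 1" using h by (simp add: q_def)
    have "rep n \<kappa> t \<circ> q = rep n \<kappa> t \<circ> p0 \<circ> inv p0" using h by (simp add: q_def o_assoc)
    also have "\<dots> = rep n \<kappa> t" by (simp add: o_assoc[symmetric] permutes_inv_o(1)[OF p0])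
    finally have "q = id" using perm_fix[OF t qp q1] by simp
    then have "q \<circ> p0 = p0" by simp
    then show "p = p0" by (simp add: q_def o_assoc[symmetric] permutes_inv_o(2)[OF p0])
  qed (use i in auto)
  have "bvec n \<kappa> t i (rep n \<kappa> t \<circ> p0) = (\<Sum>p\<in>{p. p permutes {1..n}}. if p = p0 then of_int (sign p0) else 0)"
    unfolding bvec_def by (rule sum.cong) (use eqv in auto)
  also have "\<dots> = of_int (sign p0)"
    using p0 by (simp add: finite_permutations)
  finally show ?thesis .
qed

lemma bvec_nz:
  assumes "bvec n \<kappa> t i x \<noteq> 0"
  shows "\<exists>p. p permutes {1..n} \<and> p i = 1 \<and> x = rep n \<kappa> t \<circ> p"
proof (rule ccontr)
  assume "\<not> ?thesis"
  then have "bvec n \<kappa> t i x = 0" unfolding bvec_def by (intro sum.neutral) auto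
  with assms show False by simp
qed

lemma i_in: assumes p: "p permutes {1..n}" and "p i = 1" shows "i \<in> {1..n}"
proof (rule ccontr)
  assume "i \<notin> {1..n}"
  then have "p i = i" using permutes_not_in[OF p] by simp
  with assms \<open>i \<notin> {1..n}\<close> n2 show False by auto
qed

lemma bvec_games:
  assumes t: "t \<in> TT n \<kappa>"
  shows "bvec n \<kappa> t \<in> games n \<kappa>"
  unfolding games_def
proof (intro CollectI allI impI)
  fix i x assume "bvec n \<kappa> t i x \<noteq> 0"
  then obtain p where p: "p permutes {1..n}" "p i = 1" "x = rep n \<kappa> t \<circ> p" using bvec_nz by blast
  show "i \<in> {1..n} \<and> x \<in> profiles n \<kappa>"
    using i_in[OF p(1,2)] comp_profile[OF rep_props(1)[OF t] p(1)] p(3) by simp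
qed

lemma bvec_skew:
  assumes t: "t \<in> TT n \<kappa>"
  shows "skew_symmetric n \<kappa> (bvec n \<kappa> t)"
  unfolding skew_symmetric_def
proof (intro allI impI ballI)
  fix \<sigma> i x assume s: "\<sigma> permutes {1..n}"
  let ?r = "rep n \<kappa> t"
  have "bvec n \<kappa> t (\<sigma> i) (x \<circ> inv \<sigma>)
     = (\<Sum>p\<in>{p. p permutes {1..n}}. (\<lambda>p. if p (\<sigma> i) = 1 \<and> ?r \<circ> p = x \<circ> inv \<sigma> then real_of_int (sign p) else 0) (p \<circ> inv \<sigma>))"
    unfolding bvec_def by (rule sum_permutations_compose_right[OF permutes_inv[OF s]])
  also have "\<dots> = (\<Sum>p\<in>{p. p permutes {1..n}}. of_int (sign \<sigma>) * (if p i = 1 \<and> ?r \<circ> p = x then real_of_int (sign p) else 0))"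
  proof (rule sum.cong)
    fix p assume "p \<in> {p. p permutes {1..n}}"
    then have p: "p permutes {1..n}" by simp
    have a: "(p \<circ> inv \<sigma>) (\<sigma> i) = p i" using permutes_inverses(2)[OF s] by simp
    have b: "(?r \<circ> (p \<circ> inv \<sigma>) = x \<circ> inv \<sigma>) \<longleftrightarrow> ?r \<circ> p = x"
    proof
      assume "?r \<circ> (p \<circ> inv \<sigma>) = x \<circ> inv \<sigma>"
      then have "?r \<circ> (p \<circ> inv \<sigma>) \<circ> \<sigma> = x \<circ> inv \<sigma> \<circ> \<sigma>" by simp
      then show "?r \<circ> p = x" by (simp add: o_assoc[symmetric] permutes_inv_o(2)[OF s])
    qed (simp add: o_assoc)
    have c: "sign (p \<circ> inv \<sigma>) = sign p * sign \<sigma>"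
      using sign_compose[OF perm_permutation[OF p] perm_permutation[OF permutes_inv[OF s]]]
        sign_inverse[OF perm_permutation[OF s]] by simp
    show "(\<lambda>p. if p (\<sigma> i) = 1 \<and> ?r \<circ> p = x \<circ> inv \<sigma> then real_of_int (sign p) else 0) (p \<circ> inv \<sigma>)
       = of_int (sign \<sigma>) * (if p i = 1 \<and> ?r \<circ> p = x then real_of_int (sign p) else 0)"
      using a b c by simp
  qed simp
  also have "\<dots> = of_int (sign \<sigma>) * bvec n \<kappa> t i x"
    unfolding bvec_def by (simp add: sum_distrib_left)
  finally have "of_int (sign \<sigma>) * bvec n \<kappa> t (\<sigma> i) (x \<circ> inv \<sigma>) = (of_int (sign \<sigma>) * of_int (sign \<sigma>)) * bvec n \<kappa> t i x"
    by simp
  also have "of_int (sign \<sigma>) * of_int (sign \<sigma>) = (1::real)"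
    by (metis of_int_1 of_int_mult sign_idempotent)
  finally show "bvec n \<kappa> t i x = of_int (sign \<sigma>) * bvec n \<kappa> t (\<sigma> i) (x \<circ> inv \<sigma>)" by (simp only: mult_1)
qed

lemma orbit_ex:
  assumes i: "i \<in> {1..n}" and x: "x \<in> profiles n \<kappa>" and inj: "inj_on x ({1..n} - {i})"
  shows "\<exists>t\<in>TT n \<kappa>. \<exists>p. p permutes {1..n} \<and> p i = 1 \<and> x = rep n \<kappa> t \<circ> p"
proof -
  define t where "t = (x i, x ` ({1..n} - {i}))"
  have xv: "x k \<in> {1..\<kappa>}" if "k \<in> {1..n}" for k
    using x that unfolding profiles_def by (auto simp: PiE_def Pi_def)
  have xu: "x k = undefined" if "k \<notin> {1..n}" for k
    using x that unfolding profiles_def by (auto simp: PiE_def extensional_def)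
  have "card (x ` ({1..n} - {i})) = n - 1" using card_image[OF inj] i by simp
  then have t: "t \<in> TT n \<kappa>" unfolding TT_def t_def using xv i by auto
  define r where "r = rep n \<kappa> t"
  have r1: "r 1 = x i" and rinj: "inj_on r {2..n}" and rim: "r ` {2..n} = x ` ({1..n} - {i})"
    and rp: "r \<in> profiles n \<kappa>"
    using rep_props[OF t] unfolding r_def t_def by auto
  have ru: "r k = undefined" if "k \<notin> {1..n}" for k
    using rp that unfolding profiles_def by (auto simp: PiE_def extensional_def)
  define p where "p = (\<lambda>k. if k = i then 1 else if k \<in> {1..n} then inv_into {2..n} r (x k) else k)"
  have pin: "p k \<in> {2..n}" if "k \<in> {1..n} - {i}" for k
  proof -
    have h: "x k \<in> r ` {2..n}" using rim that by blast
    have "p k = inv_into {2..n} r (x k)" using that by (simp add: p_def)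
    then show ?thesis using inv_into_into[OF h] by simp
  qed
  have rp_eq: "r (p k) = x k" if "k \<in> {1..n} - {i}" for k
  proof -
    have h: "x k \<in> r ` {2..n}" using rim that by blast
    have "p k = inv_into {2..n} r (x k)" using that by (simp add: p_def)
    then show ?thesis using f_inv_into_f[OF h] by simp
  qed
  have pinj: "inj_on p {1..n}"
  proof (rule inj_onI)
    fix k l assume k: "k \<in> {1..n}" and l: "l \<in> {1..n}" and e: "p k = p l"
    show "k = l"
    proof (cases "k = i \<or> l = i")
      case True
      show ?thesis
      proof (rule ccontr)
        assume kl: "k \<noteq> l"
        have pi: "p i = 1" by (simp add: p_def)
        show False
        proof (cases "k = i")
          case True
          then have "l \<in> {1..n} - {i}" using l kl by auto
          then have "p l \<in> {2..n}" by (rule pin)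
          then show False using e True pi by simp
        next
          case False
          then have "l = i" using \<open>k = i \<or> l = i\<close> by simp
          have "k \<in> {1..n} - {i}" using k False by auto
          then have "p k \<in> {2..n}" by (rule pin)
          then show False using e \<open>l = i\<close> pi by simp
        qed
      qed
    next
      case False
      have k': "k \<in> {1..n} - {i}" and l': "l \<in> {1..n} - {i}" using False k l by auto
      have "x k = x l" using rp_eq[OF k'] rp_eq[OF l'] e by simp
      then show ?thesis using inj k' l' unfolding inj_on_def by blast
    qed
  qed
  have psub: "p ` {1..n} \<subseteq> {1..n}"
  proof
    fix y assume "y \<in> p ` {1..n}"
    then obtain k where k: "k \<in> {1..n}" "y = p k" by auto
    show "y \<in> {1..n}"
      using pin[of k] k n2 by (cases "k = i") (auto simp: p_def)
  qed
  have "p ` {1..n} = {1..n}" using endo_inj_surj[OF _ psub pinj] by simp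
  then have "bij_betw p {1..n} {1..n}" using pinj by (simp add: bij_betw_def)
  then have pp: "p permutes {1..n}" by (rule bij_imp_permutes) (use i in \<open>auto simp: p_def\<close>)
  have "x = r \<circ> p"
  proof
    fix k show "x k = (r \<circ> p) k"
    proof (cases "k \<in> {1..n}")
      case True
      then show ?thesis using rp_eq[of k] r1 by (cases "k = i") (auto simp: p_def)
    next
      case False
      then have "k \<noteq> i" using i by auto
      then have "p k = k" using False by (auto simp: p_def)
      then show ?thesis using xu[OF False] ru[OF False] by simp
    qed
  qed
  moreover have "p i = 1" by (simp add: p_def)
  ultimately show ?thesis using t pp unfolding r_def by blast
qed

lemma finite_TT: "finite (TT n \<kappa>)"
  unfolding TT_def by (auto intro: finite_subset[of _ "Pow {1..\<kappa>}"])

lemma card_TT: "card (TT n \<kappa>) = \<kappa> * (\<kappa> choose (n - 1))"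
  unfolding TT_def card_cartesian_product using n_subsets[of "{1..\<kappa>}" "n - 1"] by simp

lemma bvec_delta:
  assumes t: "t \<in> TT n \<kappa>" and u: "u \<in> TT n \<kappa>"
  shows "bvec n \<kappa> t 1 (rep n \<kappa> u) = (if t = u then 1 else 0)"
proof (cases "t = u")
  case True
  have "bvec n \<kappa> t 1 (rep n \<kappa> t \<circ> id) = of_int (sign (id :: nat \<Rightarrow> nat))"
    by (rule bvec_val[OF t permutes_id]) simp
  then show ?thesis using True by simp
next
  case False
  show ?thesis
  proof (rule ccontr)
    assume "\<not> ?thesis"
    then have "bvec n \<kappa> t 1 (rep n \<kappa> u) \<noteq> 0" using False by simp
    then obtain p where "p permutes {1..n}" "p 1 = 1" "rep n \<kappa> u = rep n \<kappa> t \<circ> p"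
      using bvec_nz by blast
    then have "u = t" using rep_inj[OF t u] by blast
    with False show False by simp
  qed
qed

lemma bvec_inj: "inj_on (bvec n \<kappa>) (TT n \<kappa>)"
proof (rule inj_onI)
  fix t u assume t: "t \<in> TT n \<kappa>" and u: "u \<in> TT n \<kappa>" and e: "bvec n \<kappa> t = bvec n \<kappa> u"
  have "bvec n \<kappa> t 1 (rep n \<kappa> u) = 1" using e bvec_delta[OF u u] by simp
  then show "t = u" using bvec_delta[OF t u] by (auto split: if_splits)
qed

lemma skew_zero:
  assumes c: "c \<in> skew_games n \<kappa>" and i: "i \<in> {1..n}" and x: "x \<in> profiles n \<kappa>"
    and j: "j \<in> {1..n} - {i}" and k: "k \<in> {1..n} - {i}" and jk: "j \<noteq> k" and e: "x j = x k"
  shows "c i x = 0"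
proof -
  have sk: "skew_symmetric n \<kappa> c" using c unfolding skew_games_def by simp
  have s: "transpose j k permutes {1..n}" using j k by (intro permutes_swap_id) auto
  have "x \<circ> inv (transpose j k) = x"
    by (rule ext) (auto simp: e transpose_def)
  moreover have "transpose j k i = i" using j k by (auto simp: transpose_def)
  moreover have "c i x = of_int (sign (transpose j k)) * c (transpose j k i) (x \<circ> inv (transpose j k))"
    using sk s i x unfolding skew_symmetric_def by blast
  ultimately have "c i x = - c i x" using jk by (simp add: sign_swap_id)
  then show ?thesis by simp
qed

lemma span_expand:
  assumes c: "c \<in> skew_games n \<kappa>"
  shows "c = (\<Sum>t\<in>TT n \<kappa>. game_scale (c 1 (rep n \<kappa> t)) (bvec n \<kappa> t))"
proof (intro ext)
  fix i x
  have sk: "skew_symmetric n \<kappa> c" and g: "c \<in> games n \<kappa>" using c unfolding skew_games_def by auto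
  have rhs: "(\<Sum>t\<in>TT n \<kappa>. game_scale (c 1 (rep n \<kappa> t)) (bvec n \<kappa> t)) i x
       = (\<Sum>t\<in>TT n \<kappa>. c 1 (rep n \<kappa> t) * bvec n \<kappa> t i x)"
    by (simp add: sum_fun_apply2 scale_apply)
  show "c i x = (\<Sum>t\<in>TT n \<kappa>. game_scale (c 1 (rep n \<kappa> t)) (bvec n \<kappa> t)) i x"
  proof (cases "\<exists>t\<in>TT n \<kappa>. \<exists>p. p permutes {1..n} \<and> p i = 1 \<and> x = rep n \<kappa> t \<circ> p")
    case True
    then obtain t p where t: "t \<in> TT n \<kappa>" and p: "p permutes {1..n}" "p i = 1" "x = rep n \<kappa> t \<circ> p"
      by blast
    have other: "bvec n \<kappa> t' i x = 0" if t': "t' \<in> TT n \<kappa>" "t' \<noteq> t" for t'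
    proof (rule ccontr)
      assume "bvec n \<kappa> t' i x \<noteq> 0"
      then obtain p' where p': "p' permutes {1..n}" "p' i = 1" "x = rep n \<kappa> t' \<circ> p'"
        using bvec_nz by blast
      define q where "q = p \<circ> inv p'"
      have qp: "q permutes {1..n}" unfolding q_def by (intro permutes_compose permutes_inv p p')
      have "inv p' 1 = i" using permutes_inverses(2)[OF p'(1), of i] p'(2) by simp
      then have q1: "q 1 = 1" using p by (simp add: q_def)
      have "rep n \<kappa> t \<circ> q = rep n \<kappa> t' \<circ> p' \<circ> inv p'" using p p' by (simp add: q_def o_assoc)
      also have "\<dots> = rep n \<kappa> t'" by (simp add: o_assoc[symmetric] permutes_inv_o(1)[OF p'(1)])
      finally have "t' = t" using rep_inj[OF t t'(1) qp q1] by simp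
      with t' show False by simp
    qed
    have "(\<Sum>t\<in>TT n \<kappa>. c 1 (rep n \<kappa> t) * bvec n \<kappa> t i x) = c 1 (rep n \<kappa> t) * bvec n \<kappa> t i x"
      using sum.remove[OF finite_TT t, of "\<lambda>t. c 1 (rep n \<kappa> t) * bvec n \<kappa> t i x"] other by simp
    also have "\<dots> = c 1 (rep n \<kappa> t) * of_int (sign p)" using bvec_val[OF t p(1,2)] p(3) by simp
    also have "\<dots> = c i x"
    proof -
      have ii: "i \<in> {1..n}" using i_in[OF p(1,2)] .
      have xp: "x \<in> profiles n \<kappa>" using comp_profile[OF rep_props(1)[OF t] p(1)] p(3) by simp
      have "c i x = of_int (sign p) * c (p i) (x \<circ> inv p)"
        using sk p(1) ii xp unfolding skew_symmetric_def by blast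
      also have "x \<circ> inv p = rep n \<kappa> t" using p(3) by (simp add: o_assoc[symmetric] permutes_inv_o(1)[OF p(1)])
      finally show ?thesis using p(2) by simp
    qed
    finally show ?thesis using rhs by simp
  next
    case False
    then have "bvec n \<kappa> t i x = 0" if "t \<in> TT n \<kappa>" for t
      using bvec_nz that by blast
    then have r0: "(\<Sum>t\<in>TT n \<kappa>. c 1 (rep n \<kappa> t) * bvec n \<kappa> t i x) = 0" by simp
    have "c i x = 0"
    proof (cases "i \<in> {1..n} \<and> x \<in> profiles n \<kappa>")
      case True
      show ?thesis
      proof (cases "inj_on x ({1..n} - {i})")
        case True
        then show ?thesis using orbit_ex[of i x] \<open>i \<in> {1..n} \<and> x \<in> profiles n \<kappa>\<close> False by blast
      next
        case False
        then obtain j k where "j \<in> {1..n} - {i}" "k \<in> {1..n} - {i}" "j \<noteq> k" "x j = x k"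
          unfolding inj_on_def by blast
        then show ?thesis using skew_zero[OF c] \<open>i \<in> {1..n} \<and> x \<in> profiles n \<kappa>\<close> by blast
      qed
    next
      case False
      then show ?thesis using g unfolding games_def by blast
    qed
    then show ?thesis using rhs r0 by simp
  qed
qed

end

lemma dim_skew:
  assumes n2: "2 \<le> n"
  shows "vector_space.dim game_scale (skew_games n \<kappa>) = \<kappa> * (\<kappa> choose (n - 1))"
proof -
  let ?B = "bvec n \<kappa> ` TT n \<kappa>"
  have sub: "?B \<subseteq> skew_games n \<kappa>"
    using bvec_games[OF n2] bvec_skew[OF n2] unfolding skew_games_def by auto
  have sp: "skew_games n \<kappa> \<subseteq> gs.span ?B"
  proof
    fix c assume c: "c \<in> skew_games n \<kappa>"
    have "(\<Sum>t\<in>TT n \<kappa>. game_scale (c 1 (rep n \<kappa> t)) (bvec n \<kappa> t)) \<in> gs.span ?B"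
      by (intro gs.span_sum gs.span_scale gs.span_base) auto
    then show "c \<in> gs.span ?B" using span_expand[OF n2 c] by simp
  qed
  have ind: "gs.independent ?B"
  proof
    assume "gs.dependent ?B"
    then obtain u where u: "\<exists>v\<in>?B. u v \<noteq> 0" "(\<Sum>v\<in>?B. game_scale (u v) v) = 0"
      using gs.dependent_finite[of ?B] finite_TT[OF n2] by auto
    have s0: "(\<Sum>t\<in>TT n \<kappa>. game_scale (u (bvec n \<kappa> t)) (bvec n \<kappa> t)) = 0"
      using u(2) sum.reindex[OF bvec_inj[OF n2], of "\<lambda>v. game_scale (u v) v"] by simp
    have "u (bvec n \<kappa> s) = 0" if s: "s \<in> TT n \<kappa>" for s
    proof -
      have "0 = (\<Sum>t\<in>TT n \<kappa>. game_scale (u (bvec n \<kappa> t)) (bvec n \<kappa> t)) 1 (rep n \<kappa> s)"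
        using s0 by simp
      also have "\<dots> = (\<Sum>t\<in>TT n \<kappa>. u (bvec n \<kappa> t) * bvec n \<kappa> t 1 (rep n \<kappa> s))"
        by (simp add: sum_fun_apply2 scale_apply)
      also have "\<dots> = (\<Sum>t\<in>TT n \<kappa>. u (bvec n \<kappa> t) * (if t = s then 1 else 0))"
        by (rule sum.cong[OF refl]) (simp only: bvec_delta[OF n2 _ s])
      also have "\<dots> = u (bvec n \<kappa> s)" using s finite_TT[OF n2] by (simp add: if_distrib cong: if_cong)
      finally show ?thesis by simp
    qed
    with u(1) show False by auto
  qed
  have "card ?B = gs.dim (skew_games n \<kappa>)"
    by (rule gs.basis_card_eq_dim[OF sub sp ind])
  moreover have "card ?B = card (TT n \<kappa>)" by (rule card_image[OF bvec_inj[OF n2]])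
  ultimately show ?thesis using card_TT[OF n2] by simp
qed

theorem corollary4p6:
  fixes n \<kappa> :: nat
  assumes "2 \<le> n" and "n \<le> \<kappa> + 1"
  shows "vector_space.dim game_scale (skew_games n \<kappa>) = \<kappa> * (\<kappa> choose (n - 1))
    \<and> real (vector_space.dim game_scale (skew_games n \<kappa>))
        = real \<kappa> * fact \<kappa> / (fact (n - 1) * fact (\<kappa> - n + 1))"
proof -
  have d: "vector_space.dim game_scale (skew_games n \<kappa>) = \<kappa> * (\<kappa> choose (n - 1))"
    by (rule dim_skew[OF assms(1)])
  have le: "n - 1 \<le> \<kappa>" using assms by simp
  have e: "(fact (\<kappa> - (n - 1)) :: real) = fact (\<kappa> - n + 1)"
  proof (cases "n \<le> \<kappa>")
    case True
    then have "\<kappa> - (n - 1) = \<kappa> - n + 1" using assms by simp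
    then show ?thesis by simp
  next
    case False
    then have "n = \<kappa> + 1" using assms by simp
    then show ?thesis by simp
  qed
  have "real (\<kappa> choose (n - 1)) = fact \<kappa> / (fact (n - 1) * fact (\<kappa> - n + 1))"
  proof -
    have b: "real (\<kappa> choose (n - 1)) = fact \<kappa> / (fact (n - 1) * fact (\<kappa> - (n - 1)))"
      by (rule binomial_fact[OF le])
    show ?thesis using b by (simp only: e)
  qed
  then show ?thesis using d by simp
qed

end
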